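(* Fix $N\ge1$. For $i\ge1$ let $f_i,g_i,h_i$ be quasimodular forms of weight $i$ on $\Gamma_1(N)$. Let $u,v,w\ge1$ and $f=\sum_{i=1}^uf_i$, $g=\sum_{i=1}^vg_i$, $h=\sum_{i=1}^wh_i$. If $f,g,h$ are algebraically dependent over $\mathbb{C}$, then $f_u,g_v,h_w$ are algebraically dependent over $\mathbb{C}$.
   Context: A quasimodular form of weight $k$ on a group $\Gamma$ is a holomorphic function $f$ on the upper half-plane, holomorphic at the cusps, such that for all $\gamma=\begin{pmatrix}a&b\\c&d\end{pmatrix}\in\Gamma$, $(cz+d)^{-k}f(\gamma z)=\sum_{0\le i\le p}F_i(z)\bigl(\frac{c}{cz+d}\bigr)^i$ for holomorphic functions $F_i$ holomorphic at the cusps. *)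

theory Defs
  imports "HOL-Analysis.Analysis"
begin

definition upper_half_plane :: "complex set" where
  "upper_half_plane = {z. Im z > 0}"

definition Gamma1 :: "int \<Rightarrow> (int \<times> int \<times> int \<times> int) set" where
  "Gamma1 N = {(a,b,c,d). a*d - b*c = 1 \<and> a mod N = 1 mod N \<and> d mod N = 1 mod N \<and> c mod N = 0}"

definition moebius_act :: "int \<times> int \<times> int \<times> int \<Rightarrow> complex \<Rightarrow> complex" where
  "moebius_act \<gamma> z = (case \<gamma> of (a,b,c,d) \<Rightarrow> (of_int a * z + of_int b) / (of_int c * z + of_int d))"

text \<open>"Holomorphic at the cusps", rendered as the standard moderate-growth condition
  on the upper half-plane (polynomial growth in Im z and 1 / Im z).\<close>
definition holo_at_cusps :: "(complex \<Rightarrow> complex) \<Rightarrow> bool" where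
  "holo_at_cusps F \<longleftrightarrow> (\<exists>C A::real. \<forall>z. Im z > 0 \<longrightarrow>
      cmod (F z) \<le> C * (Im z powr A + Im z powr (- A)))"

definition quasimodular :: "(int \<times> int \<times> int \<times> int) set \<Rightarrow> nat \<Rightarrow> (complex \<Rightarrow> complex) \<Rightarrow> bool" where
  "quasimodular \<Gamma> k f \<longleftrightarrow>
     f holomorphic_on upper_half_plane \<and> holo_at_cusps f \<and>
     (\<exists>(p::nat) (F::nat \<Rightarrow> complex \<Rightarrow> complex).
        (\<forall>i\<le>p. F i holomorphic_on upper_half_plane \<and> holo_at_cusps (F i)) \<and>
        (\<forall>\<gamma>\<in>\<Gamma>. \<forall>z\<in>upper_half_plane. case \<gamma> of (a,b,c,d) \<Rightarrow>
           (of_int c * z + of_int d) powi (- int k) * f (moebius_act \<gamma> z)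
             = (\<Sum>i\<le>p. F i z * (of_int c / (of_int c * z + of_int d)) ^ i)))"

text \<open>Three functions on the upper half-plane are algebraically dependent over C:
  some nonzero polynomial P in C[X,Y,Z] (given by its coefficients c(a,b,d), degree in
  each variable at most n) satisfies P(f,g,h) = 0 identically on the upper half-plane.\<close>
definition alg_dependent3 :: "(complex \<Rightarrow> complex) \<Rightarrow> (complex \<Rightarrow> complex) \<Rightarrow> (complex \<Rightarrow> complex) \<Rightarrow> bool" where
  "alg_dependent3 f g h \<longleftrightarrow>
     (\<exists>(n::nat) (c::nat \<Rightarrow> nat \<Rightarrow> nat \<Rightarrow> complex).
        (\<exists>a\<le>n. \<exists>b\<le>n. \<exists>d\<le>n. c a b d \<noteq> 0) \<and>
        (\<forall>z\<in>upper_half_plane.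
           (\<Sum>a\<le>n. \<Sum>b\<le>n. \<Sum>d\<le>n. c a b d * f z ^ a * g z ^ b * h z ^ d) = 0))"

end

theory Submission
  imports Defs "HOL-Computational_Algebra.Polynomial"
begin

definition pf :: "(complex \<Rightarrow> complex) \<Rightarrow> bool" where
  "pf \<phi> \<longleftrightarrow> (\<exists>q. \<forall>x. \<phi> x = poly q x)"

lemma pf_const: "pf (\<lambda>x. c)"
  unfolding pf_def by (rule exI[of _ "[:c:]"]) simp

lemma pf_id: "pf (\<lambda>x. x)"
  unfolding pf_def by (rule exI[of _ "[:0,1:]"]) simp

lemma pf_add: "pf f \<Longrightarrow> pf g \<Longrightarrow> pf (\<lambda>x. f x + g x)"
  unfolding pf_def by (metis poly_add)

lemma pf_mult: "pf f \<Longrightarrow> pf g \<Longrightarrow> pf (\<lambda>x. f x * g x)"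
  unfolding pf_def by (metis poly_mult)

lemma pf_pow: "pf f \<Longrightarrow> pf (\<lambda>x. f x ^ n)"
  unfolding pf_def by (metis poly_power)

lemma pf_sum: "(\<And>i. i \<in> A \<Longrightarrow> pf (f i)) \<Longrightarrow> pf (\<lambda>x. \<Sum>i\<in>A. f i x)"
proof (induction A rule: infinite_finite_induct)
  case (infinite A) then show ?case by (simp add: pf_const)
next
  case empty then show ?case by (simp add: pf_const)
next
  case (insert a A) then show ?case by (simp add: pf_add)
qed

lemma pf_zero:
  assumes "pf \<phi>" "infinite {x. \<phi> x = 0}" shows "\<phi> y = 0"
proof -
  obtain q where q: "\<And>x. \<phi> x = poly q x" using assms(1) unfolding pf_def by blast
  show ?thesis
  proof (cases "q = 0")
    case True then show ?thesis by (simp add: q)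
  next
    case False
    then have "finite {x. poly q x = 0}" by (rule poly_roots_finite)
    with assms(2) show ?thesis by (simp add: q)
  qed
qed

definition pf2 :: "(complex \<Rightarrow> complex \<Rightarrow> complex) \<Rightarrow> bool" where
  "pf2 \<Phi> \<longleftrightarrow> (\<forall>\<sigma> \<tau>. pf \<sigma> \<longrightarrow> pf \<tau> \<longrightarrow> pf (\<lambda>x. \<Phi> (\<sigma> x) (\<tau> x)))"

lemma pf2D: "pf2 \<Phi> \<Longrightarrow> pf \<sigma> \<Longrightarrow> pf \<tau> \<Longrightarrow> pf (\<lambda>x. \<Phi> (\<sigma> x) (\<tau> x))"
  unfolding pf2_def by blast

lemma lines:
  fixes \<Phi> :: "complex \<Rightarrow> complex \<Rightarrow> complex" and z :: complex and N :: int
  assumes "pf2 \<Phi>" "Im z > 0" "N \<noteq> 0"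
    and zer: "\<And>m k::int. m \<noteq> 0 \<Longrightarrow> \<Phi> (of_int (N*m)) (of_int (N*m) * (z + of_int k) + 1) = 0"
  shows "\<Phi> 0 t = 0"
proof -
  have zk: "z + of_int k \<noteq> 0" for k :: int
  proof
    assume "z + of_int k = 0"
    then have "Im (z + of_int k) = 0" by simp
    with assms(2) show False by simp
  qed
  have line: "\<Phi> s (s * (z + of_int k) + 1) = 0" for s k
  proof (rule pf_zero[where \<phi>="\<lambda>s. \<Phi> s (s * (z + of_int k) + 1)"])
    show "pf (\<lambda>s. \<Phi> s (s * (z + of_int k) + 1))"
      by (rule pf2D[OF assms(1) pf_id]) (intro pf_add pf_mult pf_id pf_const)
    have inj: "inj_on (\<lambda>m::int. (of_int (N*m) :: complex)) (UNIV - {0})"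
      using assms(3) by (auto simp: inj_on_def)
    have "infinite (UNIV - {0::int})" by (simp add: infinite_UNIV_int)
    then have "infinite ((\<lambda>m::int. (of_int (N*m) :: complex)) ` (UNIV - {0}))"
      using finite_imageD inj by blast
    moreover have "(\<lambda>m::int. (of_int (N*m) :: complex)) ` (UNIV - {0}) \<subseteq> {s. \<Phi> s (s * (z + of_int k) + 1) = 0}"
      using zer by auto
    ultimately show "infinite {s. \<Phi> s (s * (z + of_int k) + 1) = 0}"
      using finite_subset by blast
  qed
  have hor: "\<Phi> 0 t0 = 0" if "t0 \<noteq> 1" for t0
  proof (rule pf_zero[where \<phi>="\<lambda>s. \<Phi> s t0"])
    show "pf (\<lambda>s. \<Phi> s t0)"
      by (rule pf2D[OF assms(1) pf_id pf_const])
    define sk where "sk = (\<lambda>k::int. (t0 - 1) / (z + of_int k))"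
    have inj: "inj sk"
    proof (rule injI)
      fix k k' assume "sk k = sk k'"
      then have "z + of_int k = z + of_int k'"
        using that zk[of k] zk[of k'] by (simp add: sk_def field_simps)
      then show "k = k'" by simp
    qed
    have "infinite (range sk)"
      using inj infinite_UNIV_int finite_imageD by blast
    moreover have "range sk \<subseteq> {s. \<Phi> s t0 = 0}"
    proof
      fix s assume "s \<in> range sk"
      then obtain k where k: "s = sk k" by blast
      have "s * (z + of_int k) + 1 = t0" using zk[of k] by (simp add: k sk_def)
      then show "s \<in> {s. \<Phi> s t0 = 0}" using line[of s k] by simp
    qed
    ultimately show "infinite {s. \<Phi> s t0 = 0}" using finite_subset by blast
  qed
  show ?thesis
  proof (rule pf_zero[where \<phi>="\<lambda>t. \<Phi> 0 t"])
    show "pf (\<lambda>t. \<Phi> 0 t)"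
      by (rule pf2D[OF assms(1) pf_const pf_id])
    have "UNIV - {1} \<subseteq> {t. \<Phi> 0 t = 0}" using hor by auto
    moreover have "infinite (UNIV - {1::complex})"
      by (simp add: infinite_UNIV_char_0)
    ultimately show "infinite {t. \<Phi> 0 t = 0}" using finite_subset by blast
  qed
qed


lemma term_id:
  fixes E c X Y Z :: complex
  shows "c * (E^u * X)^a * (E^v * Y)^b * (E^w * Z)^d * E^r = E^(a * u + b * v + d * w + r) * (c*X^a*Y^b*Z^d)"
proof -
  have 1: "(E^u)^a = E^(a * u)" "(E^v)^b = E^(b * v)" "(E^w)^d = E^(d * w)"
    by (metis power_mult mult.commute)+
  have "E^(a * u + b * v + d * w + r) = (E^u)^a * (E^v)^b * (E^w)^d * E^r"
    unfolding 1 by (simp only: power_add)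
  then show ?thesis by (simp only: power_mult_distrib mult_ac)
qed

lemma sum_shift:
  fixes x :: "nat \<Rightarrow> complex"
  assumes "e \<noteq> 0"
  shows "(\<Sum>i=1..u. x i * e^(u-i)) = e^u * (\<Sum>i=1..u. x i * (1/e)^i)"
  unfolding sum_distrib_left
proof (rule sum.cong)
  fix i assume "i \<in> {1..u}"
  then have 1: "e^u = e^(u-i) * e^i" by (simp flip: power_add)
  have 2: "(1/e)^i * e^i = 1" using assms by (simp add: power_one_over)
  have "e^u * (x i * (1/e)^i) = x i * e^(u-i) * ((1/e)^i * e^i)" unfolding 1 by (simp only: mult_ac)
  then show "x i * e^(u-i) = e^u * (x i * (1/e)^i)" unfolding 2 by (simp only: mult_1_right)
qed simp

lemma sum_at0:
  fixes x :: "nat \<Rightarrow> complex"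
  assumes "u \<ge> 1"
  shows "(\<Sum>i=1..u. x i * 0^(u-i)) = x u"
proof -
  have "(\<Sum>i=1..u. x i * 0^(u-i)) = (\<Sum>i=1..u. if i = u then x i else 0)"
    by (rule sum.cong) auto
  also have "\<dots> = x u" using assms by simp
  finally show ?thesis .
qed

lemma top:
  fixes x y y' :: "nat \<Rightarrow> complex" and c :: "nat \<Rightarrow> nat \<Rightarrow> nat \<Rightarrow> complex"
  assumes u: "u \<ge> 1" and v: "v \<ge> 1" and w: "w \<ge> 1"
    and T: "\<And>t. (\<Sum>a\<le>n. \<Sum>b\<le>n. \<Sum>d\<le>n. c a b d * (\<Sum>i=1..u. x i * t^i)^a
             * (\<Sum>i=1..v. y i * t^i)^b * (\<Sum>i=1..w. y' i * t^i)^d) = 0"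
    and MM: "\<And>a b d. a \<le> n \<Longrightarrow> b \<le> n \<Longrightarrow> d \<le> n \<Longrightarrow> c a b d \<noteq> 0 \<Longrightarrow> a * u+b * v+d * w \<le> M"
  shows "(\<Sum>a\<le>n. \<Sum>b\<le>n. \<Sum>d\<le>n. (if a * u+b * v+d * w = M then c a b d else 0)
             * x u^a * y v^b * y' w^d) = 0"
proof -
  define U where "U = (\<lambda>e. \<Sum>a\<le>n. \<Sum>b\<le>n. \<Sum>d\<le>n. c a b d * (\<Sum>i=1..u. x i * e^(u-i))^a
             * (\<Sum>i=1..v. y i * e^(v-i))^b * (\<Sum>i=1..w. y' i * e^(w-i))^d * e^(M - (a * u+b * v+d * w)))"
  have pfU: "pf U" unfolding U_def
    by (intro pf_sum pf_mult pf_pow pf_const pf_id)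
  have Ue: "U e = e^M * (\<Sum>a\<le>n. \<Sum>b\<le>n. \<Sum>d\<le>n. c a b d * (\<Sum>i=1..u. x i * (1/e)^i)^a
             * (\<Sum>i=1..v. y i * (1/e)^i)^b * (\<Sum>i=1..w. y' i * (1/e)^i)^d)" if e: "e \<noteq> 0" for e
    unfolding U_def sum_distrib_left
  proof (intro sum.cong refl)
    fix a b d assume abd: "a \<in> {..n}" "b \<in> {..n}" "d \<in> {..n}"
    show "c a b d * (\<Sum>i=1..u. x i * e^(u-i))^a * (\<Sum>i=1..v. y i * e^(v-i))^b
          * (\<Sum>i=1..w. y' i * e^(w-i))^d * e^(M - (a * u+b * v+d * w)) =
          e^M * (c a b d * (\<Sum>i=1..u. x i * (1/e)^i)^a * (\<Sum>i=1..v. y i * (1/e)^i)^b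
          * (\<Sum>i=1..w. y' i * (1/e)^i)^d)"
    proof (cases "c a b d = 0")
      case True then show ?thesis by simp
    next
      case False
      then have le: "a * u+b * v+d * w \<le> M" using MM abd by auto
      have pw: "M = a * u + b * v + d * w + (M - (a * u + b * v + d * w))"
        using le by simp
      have "e^M = e^(a * u + b * v + d * w + (M - (a * u + b * v + d * w)))" using pw by simp
      then show ?thesis unfolding sum_shift[OF e] by (simp only: term_id)
    qed
  qed
  have "U e = 0" if "e \<noteq> 0" for e
    using Ue[OF that] T[of "1/e"] by (simp only: mult_zero_right)
  then have "UNIV - {0} \<subseteq> {e. U e = 0}" by auto
  moreover have "infinite (UNIV - {0::complex})" by (simp add: infinite_UNIV_char_0)
  ultimately have "infinite {e. U e = 0}" using finite_subset by blast
  then have "U 0 = 0" using pf_zero[OF pfU] by blast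
  moreover have "U 0 = (\<Sum>a\<le>n. \<Sum>b\<le>n. \<Sum>d\<le>n. (if a * u+b * v+d * w = M then c a b d else 0)
             * x u^a * y v^b * y' w^d)"
    unfolding U_def sum_at0[OF u] sum_at0[OF v] sum_at0[OF w]
  proof (intro sum.cong refl)
    fix a b d assume abd: "a \<in> {..n}" "b \<in> {..n}" "d \<in> {..n}"
    show "c a b d * x u ^ a * y v ^ b * y' w ^ d * 0 ^ (M - (a * u + b * v + d * w)) =
         (if a * u + b * v + d * w = M then c a b d else 0) * x u ^ a * y v ^ b * y' w ^ d"
    proof (cases "c a b d = 0")
      case True then show ?thesis by simp
    next
      case False
      then have le: "a * u+b * v+d * w \<le> M" using MM abd by auto
      show ?thesis
      proof (cases "a * u+b * v+d * w = M")
        case True then show ?thesis by simp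
      next
        case False
        with le have "M - (a * u+b * v+d * w) \<noteq> 0" by simp
        then have "(0::complex) ^ (M - (a * u+b * v+d * w)) = 0" by simp
        then show ?thesis using False by simp
      qed
    qed
  qed
  ultimately show ?thesis by metis
qed


definition qtrans :: "(int \<times> int \<times> int \<times> int) set \<Rightarrow> nat \<Rightarrow> (complex \<Rightarrow> complex) \<Rightarrow> nat \<Rightarrow> (nat \<Rightarrow> complex \<Rightarrow> complex) \<Rightarrow> bool" where
  "qtrans \<Gamma> k f p F \<longleftrightarrow> (\<forall>\<gamma>\<in>\<Gamma>. \<forall>z\<in>upper_half_plane. case \<gamma> of (a,b,c,d) \<Rightarrow>
           (of_int c * z + of_int d) powi (- int k) * f (moebius_act \<gamma> z)
             = (\<Sum>i\<le>p. F i z * (of_int c / (of_int c * z + of_int d)) ^ i))"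

lemma qm_ex: "quasimodular \<Gamma> k f \<Longrightarrow> \<exists>p F. qtrans \<Gamma> k f p F"
  unfolding quasimodular_def qtrans_def by blast

lemma choose_q:
  assumes "\<And>i. i \<ge> 1 \<Longrightarrow> quasimodular \<Gamma> i (f i)"
  shows "\<exists>P FF. \<forall>i\<ge>1. qtrans \<Gamma> i (f i) (P i) (FF i)"
proof -
  have "\<forall>i. \<exists>pF. i \<ge> 1 \<longrightarrow> qtrans \<Gamma> i (f i) (fst pF) (snd pF)"
    using qm_ex assms by fastforce
  then obtain g where "\<forall>i. i \<ge> 1 \<longrightarrow> qtrans \<Gamma> i (f i) (fst (g i)) (snd (g i))"
    by metis
  then show ?thesis by (intro exI[of _ "\<lambda>i. fst (g i)"] exI[of _ "\<lambda>i. snd (g i)"]) simp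
qed

lemma qt_apply:
  assumes "qtrans \<Gamma> k f p F" "(a,b,c,d) \<in> \<Gamma>" "z \<in> upper_half_plane"
    "of_int c * z + of_int d \<noteq> 0"
  shows "f (moebius_act (a,b,c,d) z) = (of_int c * z + of_int d)^k *
           (\<Sum>j\<le>p. F j z * (of_int c / (of_int c * z + of_int d)) ^ j)"
proof -
  define t where "t = of_int c * z + of_int d"
  have "t powi (- int k) * f (moebius_act (a,b,c,d) z) = (\<Sum>j\<le>p. F j z * (of_int c / t) ^ j)"
    using assms(1-3) unfolding qtrans_def t_def by fastforce
  then have "inverse (t^k) * f (moebius_act (a,b,c,d) z) = (\<Sum>j\<le>p. F j z * (of_int c / t) ^ j)"
    by (simp add: power_int_minus)
  moreover have "t^k \<noteq> 0" using assms(4) by (simp add: t_def)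
  ultimately show ?thesis unfolding t_def[symmetric] by (simp add: field_simps)
qed

lemma moebius_id: "moebius_act (1,0,0,1) z = z"
  by (simp add: moebius_act_def)

lemma qt_id:
  assumes "qtrans \<Gamma> k f p F" "(1,0,0,1) \<in> \<Gamma>" "z \<in> upper_half_plane"
  shows "F 0 z = f z"
proof -
  have "f z = (\<Sum>j\<le>p. F j z * 0 ^ j)"
    using qt_apply[OF assms] by (simp add: moebius_id)
  also have "\<dots> = (\<Sum>j\<le>p. if j = 0 then F j z else 0)"
    by (rule sum.cong) auto
  also have "\<dots> = F 0 z" by simp
  finally show ?thesis by simp
qed

definition Tsum :: "nat \<Rightarrow> nat \<Rightarrow> (nat \<Rightarrow> nat) \<Rightarrow> (nat \<Rightarrow> nat \<Rightarrow> complex \<Rightarrow> complex) \<Rightarrow> complex \<Rightarrow> complex \<Rightarrow> complex \<Rightarrow> complex" where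
  "Tsum u p P F z s t = (\<Sum>i=1..u. \<Sum>j\<le>P i. F i j z * s^j * t^(p+i-j))"

lemma tsum_eq:
  assumes "\<And>i. i \<in> {1..u} \<Longrightarrow> qtrans \<Gamma> i (f i) (P i) (F i) \<and> P i \<le> p"
    "(a,b,c,d) \<in> \<Gamma>" "z \<in> upper_half_plane" "of_int c * z + of_int d = t" "t \<noteq> 0"
  shows "t^p * (\<Sum>i=1..u. f i (moebius_act (a,b,c,d) z)) = Tsum u p P F z (of_int c) t"
  unfolding Tsum_def sum_distrib_left
proof (rule sum.cong[OF refl])
  fix i assume i: "i \<in> {1..u}"
  have fi: "f i (moebius_act (a,b,c,d) z) = t^i * (\<Sum>j\<le>P i. F i j z * (of_int c / t) ^ j)"
    using qt_apply[of \<Gamma> i "f i" "P i" "F i" a b c d z] assms i by simp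
  show "t^p * f i (moebius_act (a,b,c,d) z) = (\<Sum>j\<le>P i. F i j z * of_int c ^ j * t ^ (p + i - j))"
    unfolding fi sum_distrib_left
  proof (rule sum.cong[OF refl])
    fix j assume j: "j \<in> {..P i}"
    then have "j \<le> p" using assms(1)[OF i] by auto
    then have 1: "t^(p+i) = t^(p+i-j) * t^j" by (simp flip: power_add)
    have 2: "(of_int c / t)^j * t^j = of_int c ^ j" using assms(5) by (simp add: power_divide)
    have 3: "t^p * (t^i * (F i j z * (of_int c / t) ^ j)) = t^(p+i) * (F i j z * (of_int c / t) ^ j)"
      by (simp add: power_add)
    have "t^p * (t^i * (F i j z * (of_int c / t) ^ j)) = F i j z * t^(p+i-j) * ((of_int c / t)^j * t^j)"
      unfolding 3 1 by (simp only: mult_ac)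
    also have "\<dots> = F i j z * t^(p+i-j) * of_int c ^ j" by (simp only: 2)
    finally show "t^p * (t^i * (F i j z * (of_int c / t) ^ j)) = F i j z * of_int c ^ j * t ^ (p + i - j)"
      by (simp only: mult_ac)
  qed
qed

lemma tsum0:
  assumes "\<And>i. i \<in> {1..u} \<Longrightarrow> F i 0 z = f i z"
  shows "Tsum u p P F z 0 t = t^p * (\<Sum>i=1..u. f i z * t^i)"
  unfolding Tsum_def sum_distrib_left
proof (rule sum.cong[OF refl])
  fix i assume i: "i \<in> {1..u}"
  have "(\<Sum>j\<le>P i. F i j z * 0^j * t^(p+i-j)) = (\<Sum>j\<le>P i. if j = 0 then F i j z * t^(p+i-j) else 0)"
    by (rule sum.cong) auto
  also have "\<dots> = F i 0 z * t^(p+i)" by simp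
  finally show "(\<Sum>j\<le>P i. F i j z * 0^j * t^(p+i-j)) = t^p * (f i z * t^i)"
    using assms[OF i] by (simp add: power_add)
qed

definition Ecomb :: "nat \<Rightarrow> (nat \<Rightarrow> nat \<Rightarrow> nat \<Rightarrow> complex) \<Rightarrow> nat \<Rightarrow> complex \<Rightarrow> complex \<Rightarrow> complex \<Rightarrow> complex \<Rightarrow> complex" where
  "Ecomb n c p A B C t = (\<Sum>a\<le>n. \<Sum>b\<le>n. \<Sum>d\<le>n. c a b d * A^a * B^b * C^d * t^(p*(3*n-(a+b+d))))"

lemma ecomb_scale:
  "Ecomb n c p (t^p * A) (t^p * B) (t^p * C) t =
     t^(p*(3*n)) * (\<Sum>a\<le>n. \<Sum>b\<le>n. \<Sum>d\<le>n. c a b d * A^a * B^b * C^d)"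
  unfolding Ecomb_def sum_distrib_left
proof (intro sum.cong refl)
  fix a b d assume abd: "a \<in> {..n}" "b \<in> {..n}" "d \<in> {..n}"
  then have "a + b + d \<le> 3*n" by auto
  then have e0: "p*(3*n) = p*(a+b+d) + p*(3*n-(a+b+d))"
    by (metis add_mult_distrib2 le_add_diff_inverse)
  have e: "p*(3*n) = a * p + b * p + d * p + p*(3*n-(a+b+d))"
    unfolding e0 by (simp add: algebra_simps)
  show "c a b d * (t^p * A)^a * (t^p * B)^b * (t^p * C)^d * t^(p*(3*n-(a+b+d))) =
        t^(p*(3*n)) * (c a b d * A^a * B^b * C^d)"
    unfolding e by (rule term_id)
qed

lemma im_moebius:
  assumes "a*d - b*c = 1" "Im z > 0" "of_int c * z + of_int d \<noteq> 0"
  shows "Im (moebius_act (a,b,c,d) z) > 0"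
proof -
  have num: "Im (of_int a * z + of_int b) * Re (of_int c * z + of_int d)
           - Re (of_int a * z + of_int b) * Im (of_int c * z + of_int d) = Im z"
  proof -
    have "Im (of_int a * z + of_int b) * Re (of_int c * z + of_int d)
           - Re (of_int a * z + of_int b) * Im (of_int c * z + of_int d)
          = (of_int (a*d - b*c)) * Im z"
      by (simp add: algebra_simps)
    then show ?thesis using assms(1) by simp
  qed
  have den: "(Re (of_int c * z + of_int d))^2 + (Im (of_int c * z + of_int d))^2 > 0"
    using assms(3) by (metis complex_eq_0 less_le sum_power2_ge_zero)
  show ?thesis unfolding moebius_act_def using num den assms(2)
    by (simp add: Im_divide)
qed


lemma gamma_mem: "(1, k, N*m, 1 + k*(N*m)) \<in> Gamma1 N"
proof -
  have "(1 + k*(N*m)) mod N = 1 mod N"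
    by (metis mod_mult_self2 mult.left_commute)
  then show ?thesis unfolding Gamma1_def by simp
qed

lemma gamma_id: "(1, 0, 0, 1) \<in> Gamma1 N"
  unfolding Gamma1_def by simp

theorem lemma5p4:
  fixes N :: int and u v w :: nat
    and fs gs hs :: "nat \<Rightarrow> complex \<Rightarrow> complex"
  assumes "N \<ge> 1"
    and "\<And>i. i \<ge> 1 \<Longrightarrow> quasimodular (Gamma1 N) i (fs i)"
    and "\<And>i. i \<ge> 1 \<Longrightarrow> quasimodular (Gamma1 N) i (gs i)"
    and "\<And>i. i \<ge> 1 \<Longrightarrow> quasimodular (Gamma1 N) i (hs i)"
    and "u \<ge> 1" and "v \<ge> 1" and "w \<ge> 1"
    and "alg_dependent3 (\<lambda>z. \<Sum>i=1..u. fs i z) (\<lambda>z. \<Sum>i=1..v. gs i z) (\<lambda>z. \<Sum>i=1..w. hs i z)"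
  shows "alg_dependent3 (fs u) (gs v) (hs w)"
proof -
  obtain Pf FFf where qf: "\<forall>i\<ge>1. qtrans (Gamma1 N) i (fs i) (Pf i) (FFf i)"
    using choose_q[OF assms(2)] by blast
  obtain Pg FFg where qg: "\<forall>i\<ge>1. qtrans (Gamma1 N) i (gs i) (Pg i) (FFg i)"
    using choose_q[OF assms(3)] by blast
  obtain Ph FFh where qh: "\<forall>i\<ge>1. qtrans (Gamma1 N) i (hs i) (Ph i) (FFh i)"
    using choose_q[OF assms(4)] by blast
  define p where "p = Max (Pf ` {1..u} \<union> Pg ` {1..v} \<union> Ph ` {1..w})"
  have fin: "finite (Pf ` {1..u} \<union> Pg ` {1..v} \<union> Ph ` {1..w})" by simp
  have qf': "qtrans (Gamma1 N) i (fs i) (Pf i) (FFf i) \<and> Pf i \<le> p" if "i \<in> {1..u}" for i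
    using qf that Max_ge[OF fin] unfolding p_def by auto
  have qg': "qtrans (Gamma1 N) i (gs i) (Pg i) (FFg i) \<and> Pg i \<le> p" if "i \<in> {1..v}" for i
    using qg that Max_ge[OF fin] unfolding p_def by auto
  have qh': "qtrans (Gamma1 N) i (hs i) (Ph i) (FFh i) \<and> Ph i \<le> p" if "i \<in> {1..w}" for i
    using qh that Max_ge[OF fin] unfolding p_def by auto
  obtain n c where nz: "\<exists>a\<le>n. \<exists>b\<le>n. \<exists>d\<le>n. c a b d \<noteq> 0"
    and dep: "\<And>z. z \<in> upper_half_plane \<Longrightarrow>
      (\<Sum>a\<le>n. \<Sum>b\<le>n. \<Sum>d\<le>n. c a b d * (\<Sum>i=1..u. fs i z) ^ a * (\<Sum>i=1..v. gs i z) ^ b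
          * (\<Sum>i=1..w. hs i z) ^ d) = 0"
    using assms(8) unfolding alg_dependent3_def by blast
  define S where "S = {a * u + b * v + d * w | a b d. a \<le> n \<and> b \<le> n \<and> d \<le> n \<and> c a b d \<noteq> 0}"
  have "S \<subseteq> (\<lambda>(a,b,d). a * u + b * v + d * w) ` ({..n} \<times> {..n} \<times> {..n})"
    unfolding S_def by force
  then have finS: "finite S" by (rule finite_subset) simp
  have neS: "S \<noteq> {}" using nz unfolding S_def by blast
  define M where "M = Max S"
  have MM: "a * u + b * v + d * w \<le> M" if "a \<le> n" "b \<le> n" "d \<le> n" "c a b d \<noteq> 0" for a b d
    unfolding M_def using that by (intro Max_ge[OF finS]) (auto simp: S_def)
  have "M \<in> S" unfolding M_def using finS neS by (rule Max_in)
  then obtain a0 b0 d0 where a0: "a0 \<le> n" "b0 \<le> n" "d0 \<le> n" "c a0 b0 d0 \<noteq> 0"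
    "a0 * u + b0 * v + d0 * w = M" unfolding S_def by blast
  define c' where "c' = (\<lambda>a b d. if a * u + b * v + d * w = M then c a b d else 0)"
  show ?thesis unfolding alg_dependent3_def
  proof (rule exI[of _ n], rule exI[of _ c'], rule conjI)
    show "\<exists>a\<le>n. \<exists>b\<le>n. \<exists>d\<le>n. c' a b d \<noteq> 0" using a0 unfolding c'_def by auto
  next
    show "\<forall>z\<in>upper_half_plane. (\<Sum>a\<le>n. \<Sum>b\<le>n. \<Sum>d\<le>n. c' a b d * fs u z ^ a * gs v z ^ b * hs w z ^ d) = 0"
    proof
    fix z assume z: "z \<in> upper_half_plane"
    have Imz: "Im z > 0" using z unfolding upper_half_plane_def by simp
    define \<Phi> where "\<Phi> = (\<lambda>s t. Ecomb n c p (Tsum u p Pf FFf z s t) (Tsum v p Pg FFg z s t)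
                                  (Tsum w p Ph FFh z s t) t)"
    have pf2: "pf2 \<Phi>" unfolding pf2_def
    proof (intro allI impI)
      fix \<sigma> \<tau> :: "complex \<Rightarrow> complex" assume h1: "pf \<sigma>" and h2: "pf \<tau>"
      show "pf (\<lambda>x. \<Phi> (\<sigma> x) (\<tau> x))" unfolding \<Phi>_def Ecomb_def Tsum_def
        by (intro pf_sum pf_mult pf_pow pf_const h1 h2)
    qed
    have zer: "\<Phi> (of_int (N*m)) (of_int (N*m) * (z + of_int k) + 1) = 0" if m: "m \<noteq> 0" for m k :: int
    proof -
      define s where "s = (of_int (N*m) :: complex)"
      define t where "t = s * (z + of_int k) + 1"
      have teq: "of_int (N*m) * z + of_int (1 + k*(N*m)) = t"
        by (simp add: t_def s_def algebra_simps)
      have "Im t = of_int (N*m) * Im z" by (simp add: t_def s_def)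
      moreover have "N*m \<noteq> 0" using m assms(1) by simp
      ultimately have t0: "t \<noteq> 0" using Imz by auto
      have gz: "moebius_act (1, k, N*m, 1 + k*(N*m)) z \<in> upper_half_plane"
        unfolding upper_half_plane_def using im_moebius[of 1 "1 + k*(N*m)" k "N*m" z] Imz teq t0
        by simp
      have Tf: "Tsum u p Pf FFf z s t = t^p * (\<Sum>i=1..u. fs i (moebius_act (1, k, N*m, 1 + k*(N*m)) z))"
        using tsum_eq[of u "Gamma1 N" fs Pf FFf p 1 k "N*m" "1 + k*(N*m)" z t] qf' gamma_mem z teq t0
        unfolding s_def by simp
      have Tg: "Tsum v p Pg FFg z s t = t^p * (\<Sum>i=1..v. gs i (moebius_act (1, k, N*m, 1 + k*(N*m)) z))"
        using tsum_eq[of v "Gamma1 N" gs Pg FFg p 1 k "N*m" "1 + k*(N*m)" z t] qg' gamma_mem z teq t0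
        unfolding s_def by simp
      have Th: "Tsum w p Ph FFh z s t = t^p * (\<Sum>i=1..w. hs i (moebius_act (1, k, N*m, 1 + k*(N*m)) z))"
        using tsum_eq[of w "Gamma1 N" hs Ph FFh p 1 k "N*m" "1 + k*(N*m)" z t] qh' gamma_mem z teq t0
        unfolding s_def by simp
      have "\<Phi> s t = t^(p*(3*n)) * 0"
        unfolding \<Phi>_def Tf Tg Th ecomb_scale dep[OF gz] ..
      then show ?thesis unfolding s_def t_def by simp
    qed
    have \<Phi>0: "\<Phi> 0 t = 0" for t
      using lines[OF pf2 Imz _ zer] assms(1) by simp
    have f0: "FFf i 0 z = fs i z" if "i \<in> {1..u}" for i
      using qt_id[OF _ gamma_id z] qf' that by blast
    have g0: "FFg i 0 z = gs i z" if "i \<in> {1..v}" for i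
      using qt_id[OF _ gamma_id z] qg' that by blast
    have h0: "FFh i 0 z = hs i z" if "i \<in> {1..w}" for i
      using qt_id[OF _ gamma_id z] qh' that by blast
    define T where "T = (\<lambda>t. \<Sum>a\<le>n. \<Sum>b\<le>n. \<Sum>d\<le>n. c a b d * (\<Sum>i=1..u. fs i z * t^i)^a
             * (\<Sum>i=1..v. gs i z * t^i)^b * (\<Sum>i=1..w. hs i z * t^i)^d)"
    have PT: "\<Phi> 0 t = t^(p*(3*n)) * T t" for t
    proof -
      have A: "Tsum u p Pf FFf z 0 t = t^p * (\<Sum>i=1..u. fs i z * t^i)"
        by (rule tsum0) (rule f0)
      have B: "Tsum v p Pg FFg z 0 t = t^p * (\<Sum>i=1..v. gs i z * t^i)"
        by (rule tsum0) (rule g0)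
      have C: "Tsum w p Ph FFh z 0 t = t^p * (\<Sum>i=1..w. hs i z * t^i)"
        by (rule tsum0) (rule h0)
      show ?thesis unfolding \<Phi>_def A B C ecomb_scale T_def ..
    qed
    have pfT: "pf T" unfolding T_def by (intro pf_sum pf_mult pf_pow pf_const pf_id)
    have "T t = 0" if "t \<noteq> 0" for t
      using PT[of t] \<Phi>0[of t] that by simp
    then have "UNIV - {0} \<subseteq> {t. T t = 0}" by auto
    moreover have "infinite (UNIV - {0::complex})" by (simp add: infinite_UNIV_char_0)
    ultimately have "infinite {t. T t = 0}" using finite_subset by blast
    then have T0: "T t = 0" for t using pf_zero[OF pfT] by blast
    show "(\<Sum>a\<le>n. \<Sum>b\<le>n. \<Sum>d\<le>n. c' a b d * fs u z ^ a * gs v z ^ b * hs w z ^ d) = 0"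
      unfolding c'_def
      by (rule top[where u=u and v=v and w=w and n=n and c=c and x="\<lambda>i. fs i z" and y="\<lambda>i. gs i z" and y'="\<lambda>i. hs i z" and M=M, OF assms(5-7) _ MM])
         (use T0 in \<open>simp add: T_def\<close>)
    qed
  qed
qed

end
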